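(* Let $\sigma$ be a completely erasing $k$-block substitution with $w_\epsilon\ne1^k$ that satisfies the optimality condition. Then $f_\sigma$ is Devaney chaotic. That is: (a) there is a point whose $f_\sigma$-orbit is dense in $\mathbb I$; (b) the $f_\sigma$-periodic points are dense in $\mathbb I$; (c) $f_\sigma$ has sensitive dependence on initial conditions.
   Context: Notation: $\mathbb I=[0,1]$. $\{0,1\}^*$ and $\{0,1\}^\omega$ denote finite and infinite binary words, and $\epsilon$ is the empty word. For a word $w$, set $0.w=\sum_iw_i2^{-i}$. For $x\in(0,1]$, $\widetilde x$ is the unique infinite binary expansion of $x$ not ending in $0^\infty$. Fix $k\ge2$. An erasing $k$-block substitution is a map $\sigma:\{0,1\}^k\to\{0,1\}^*$ with exactly one block $w_\epsilon$ such that $\sigma(w_\epsilon)=\epsilon$. $\sigma$ is alternating if there are $\sigma_1,\dots,\sigma_k:\{0,1\}\to\{0,1\}^*$ with $\sigma(b_1\cdots b_k)=\sigma_1(b_1)\cdots\sigma_k(b_k)$. It is then extended to all finite or infinite words by $\sigma(u)=\prod_j\sigma_{((j-1)\bmod k)+1}(u_j)$. $\sigma$ is completely erasing if it is erasing and alternating, and every $w\in\{0,1\}^*$ satisfies $\sigma^n(w)=\epsilon$ for some $n\in\mathbb N$. The map $f_\sigma:\mathbb I\to\mathbb I$ is defined by $f_\sigma(x)=0.\sigma(\widetilde x)$ if $x\in(0,1]$ and $\widetilde x\neq w_\epsilon^\infty$, and $f_\sigma(x)=0$ otherwise. Optimality condition: every $w\in\{0,1\}^\omega$ can be written as $w=\prod_{i\ge1}\sigma(b_i)$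 with blocks $b_i\in\{0,1\}^k$ satisfying $\sigma(b_i)\ne\epsilon$. Sensitive dependence: there is $c>0$ such that for all $x\in\mathbb I$ and $\delta>0$ there exist $z$ with $|x-z|<\delta$ and $n\in\mathbb N$ with $|f_\sigma^n(x)-f_\sigma^n(z)|\ge c$. *)

theory Defs
  imports Complex_Main
begin

text \<open>Bits are booleans: True stands for 1, False for 0. Words are 0-indexed.
  An alternating k-block substitution is given by its letter maps
  s i :: bool \<Rightarrow> bool list for i < k (s i corresponds to sigma_(i+1)).\<close>

definition blk :: "nat \<Rightarrow> (nat \<Rightarrow> bool \<Rightarrow> bool list) \<Rightarrow> bool list \<Rightarrow> bool list" where
  "blk k s b = concat (map (\<lambda>i. s i (b ! i)) [0..<k])"

definition ext_fin :: "nat \<Rightarrow> (nat \<Rightarrow> bool \<Rightarrow> bool list) \<Rightarrow> bool list \<Rightarrow> bool list" where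
  "ext_fin k s u = concat (map (\<lambda>j. s (j mod k) (u ! j)) [0..<length u])"

definition erasing :: "nat \<Rightarrow> (nat \<Rightarrow> bool \<Rightarrow> bool list) \<Rightarrow> bool" where
  "erasing k s \<longleftrightarrow> (\<exists>!w. length w = k \<and> blk k s w = [])"

definition w_eps :: "nat \<Rightarrow> (nat \<Rightarrow> bool \<Rightarrow> bool list) \<Rightarrow> bool list" where
  "w_eps k s = (THE w. length w = k \<and> blk k s w = [])"

definition completely_erasing :: "nat \<Rightarrow> (nat \<Rightarrow> bool \<Rightarrow> bool list) \<Rightarrow> bool" where
  "completely_erasing k s \<longleftrightarrow> erasing k s \<and> (\<forall>w. \<exists>n. (ext_fin k s ^^ n) w = [])"

definition val_fin :: "bool list \<Rightarrow> real" where
  "val_fin u = (\<Sum>i<length u. of_bool (u ! i) / 2 ^ Suc i)"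

definition val_inf :: "(nat \<Rightarrow> bool) \<Rightarrow> real" where
  "val_inf w = (\<Sum>i. of_bool (w i) / 2 ^ Suc i)"

text \<open>The value 0.sigma(x) of the (finite or infinite) word sigma(x) =
  prod_j s (j mod k) (x j): the j-th factor starts after L j letters.\<close>
definition pre_len :: "nat \<Rightarrow> (nat \<Rightarrow> bool \<Rightarrow> bool list) \<Rightarrow> (nat \<Rightarrow> bool) \<Rightarrow> nat \<Rightarrow> nat" where
  "pre_len k s x j = (\<Sum>i<j. length (s (i mod k) (x i)))"

definition val_sub :: "nat \<Rightarrow> (nat \<Rightarrow> bool \<Rightarrow> bool list) \<Rightarrow> (nat \<Rightarrow> bool) \<Rightarrow> real" where
  "val_sub k s x = (\<Sum>j. val_fin (s (j mod k) (x j)) / 2 ^ pre_len k s x j)"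

definition tilde :: "real \<Rightarrow> (nat \<Rightarrow> bool)" where
  "tilde x = (THE w. (\<forall>n. \<exists>m>n. w m) \<and> val_inf w = x)"

definition f_sigma :: "nat \<Rightarrow> (nat \<Rightarrow> bool \<Rightarrow> bool list) \<Rightarrow> real \<Rightarrow> real" where
  "f_sigma k s x =
     (if 0 < x \<and> x \<le> 1 \<and> tilde x \<noteq> (\<lambda>j. w_eps k s ! (j mod k))
      then val_sub k s (tilde x) else 0)"

text \<open>Optimality: every infinite word is a concatenation of non-erased block images.\<close>
definition optimal :: "nat \<Rightarrow> (nat \<Rightarrow> bool \<Rightarrow> bool list) \<Rightarrow> bool" where
  "optimal k s \<longleftrightarrow> (\<forall>w :: nat \<Rightarrow> bool. \<exists>b :: nat \<Rightarrow> bool list.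
     (\<forall>m. length (b m) = k \<and> blk k s (b m) \<noteq> []) \<and>
     (\<forall>m i. i < length (blk k s (b m)) \<longrightarrow>
        w ((\<Sum>l<m. length (blk k s (b l))) + i) = blk k s (b m) ! i))"

definition dense_orbit :: "(real \<Rightarrow> real) \<Rightarrow> bool" where
  "dense_orbit f \<longleftrightarrow> (\<exists>x\<in>{0..1}. \<forall>y\<in>{0..1}. \<forall>e>0. \<exists>n. \<bar>(f ^^ n) x - y\<bar> < e)"

definition dense_periodic :: "(real \<Rightarrow> real) \<Rightarrow> bool" where
  "dense_periodic f \<longleftrightarrow> (\<forall>y\<in>{0..1}. \<forall>e>0. \<exists>p\<in>{0..1}. \<bar>p - y\<bar> < e \<and> (\<exists>n>0. (f ^^ n) p = p))"

definition sensitive :: "(real \<Rightarrow> real) \<Rightarrow> bool" where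
  "sensitive f \<longleftrightarrow> (\<exists>c>0. \<forall>x\<in>{0..1}. \<forall>\<delta>>0. \<exists>z\<in>{0..1}. \<bar>x - z\<bar> < \<delta> \<and>
      (\<exists>n. \<bar>(f ^^ n) x - (f ^^ n) z\<bar> \<ge> c))"

end

theory Submission
  imports Defs "HOL-Library.Countable"
begin

definition pre :: "'a list \<Rightarrow> (nat \<Rightarrow> 'a) \<Rightarrow> nat \<Rightarrow> 'a" where
  "pre u W n = (if n < length u then u ! n else W (n - length u))"

definition off :: "(nat \<Rightarrow> 'a list) \<Rightarrow> nat \<Rightarrow> nat" where
  "off F j = (\<Sum>i<j. length (F i))"

definition flat :: "(nat \<Rightarrow> bool list) \<Rightarrow> nat \<Rightarrow> bool" where
  "flat F n = (if \<exists>j. n < off F (Suc j)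
     then F (LEAST j. n < off F (Suc j)) ! (n - off F (LEAST j. n < off F (Suc j))) else False)"

definition io :: "(nat \<Rightarrow> bool) \<Rightarrow> bool" where
  "io W \<longleftrightarrow> (\<forall>n. \<exists>m>n. W m)"

definition agree :: "nat \<Rightarrow> (nat \<Rightarrow> 'a) \<Rightarrow> (nat \<Rightarrow> 'a) \<Rightarrow> bool" where
  "agree L X Y \<longleftrightarrow> (\<forall>n<L. X n = Y n)"

lemma pre_Nil[simp]: "pre [] W = W"
  by (auto simp: pre_def fun_eq_iff)

lemma pre_append: "pre (u @ v) W = pre u (pre v W)"
  by (auto simp: pre_def fun_eq_iff nth_append)

lemma pre_Cons: "pre (a # u) W = pre [a] (pre u W)"
  using pre_append[of "[a]" u W] by simp

lemma io_pre: "io W \<Longrightarrow> io (pre u W)"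
  unfolding io_def
proof
  fix n assume a: "\<forall>n. \<exists>m>n. W m"
  then obtain m where "m > n" "W m" by blast
  then show "\<exists>m>n. pre u W m" by (intro exI[of _ "m + length u"]) (auto simp: pre_def)
qed

lemma agree_pre: "agree L X Y \<Longrightarrow> agree (L + length u) (pre u X) (pre u Y)"
  by (auto simp: agree_def pre_def)

lemma agree_mono: "agree L X Y \<Longrightarrow> L' \<le> L \<Longrightarrow> agree L' X Y"
  by (auto simp: agree_def)

lemma off_mono: "j \<le> j' \<Longrightarrow> off F j \<le> off F j'"
  unfolding off_def by (rule sum_mono2) auto

lemma off_0[simp]: "off F 0 = 0" by (simp add: off_def)
lemma off_Suc: "off F (Suc j) = off F j + length (F j)" by (simp add: off_def)
lemma off_Suc_shift: "off F (Suc j) = length (F 0) + off (\<lambda>j. F (Suc j)) j"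
  unfolding off_def by (rule sum.lessThan_Suc_shift)

lemma flat_at:
  assumes "off F j \<le> n" "n < off F (Suc j)"
  shows "flat F n = F j ! (n - off F j)"
proof -
  have ex: "\<exists>j. n < off F (Suc j)" using assms by blast
  let ?j = "LEAST j. n < off F (Suc j)"
  have l: "n < off F (Suc ?j)" using LeastI_ex[OF ex] .
  have "?j \<le> j" using assms(2) by (rule Least_le)
  moreover have "\<not> ?j < j"
  proof
    assume "?j < j"
    then have "off F (Suc ?j) \<le> off F j" by (intro off_mono) auto
    with l assms(1) show False by linarith
  qed
  ultimately have jj: "?j = j" by linarith
  have "flat F n = F ?j ! (n - off F ?j)" unfolding flat_def using ex by (rule if_P)
  then show ?thesis unfolding jj .
qed

lemma flat_find:
  assumes "\<exists>j. n < off F (Suc j)"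
  shows "\<exists>j. off F j \<le> n \<and> n < off F (Suc j)"
proof -
  let ?j = "LEAST j. n < off F (Suc j)"
  have l: "n < off F (Suc ?j)" using LeastI_ex[OF assms] .
  show ?thesis
  proof (cases ?j)
    case 0 then show ?thesis using l by (intro exI[of _ 0]) auto
  next
    case (Suc j1)
    then have "\<not> n < off F (Suc j1)" using not_less_Least[of j1 "\<lambda>j. n < off F (Suc j)"] by auto
    then show ?thesis using l Suc by (intro exI[of _ ?j]) auto
  qed
qed

lemma flat_none: "\<not> (\<exists>j. n < off F (Suc j)) \<Longrightarrow> flat F n = False"
  by (simp add: flat_def)

lemma flat_pre: "flat F = pre (F 0) (flat (\<lambda>j. F (Suc j)))"
proof
  fix n
  let ?G = "\<lambda>j. F (Suc j)"
  show "flat F n = pre (F 0) (flat ?G) n"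
  proof (cases "\<exists>j. n < off F (Suc j)")
    case True
    then obtain j where j: "off F j \<le> n" "n < off F (Suc j)" using flat_find by blast
    show ?thesis
    proof (cases j)
      case 0
      have e1: "flat F n = F 0 ! n" using flat_at[OF j] 0 by simp
      have "n < length (F 0)" using j(2) 0 off_Suc[of F 0] by simp
      then show ?thesis using e1 by (simp add: pre_def)
    next
      case (Suc j')
      have a: "off F (Suc j') = length (F 0) + off ?G j'" by (rule off_Suc_shift)
      have b: "off F (Suc (Suc j')) = length (F 0) + off ?G (Suc j')" by (rule off_Suc_shift)
      have c: "off ?G j' \<le> n - length (F 0)" "n - length (F 0) < off ?G (Suc j')"
        using j Suc a b by auto
      have e2: "flat ?G (n - length (F 0)) = F (Suc j') ! (n - length (F 0) - off ?G j')"
        using flat_at[OF c] by simp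
      have e1: "flat F n = F (Suc j') ! (n - off F (Suc j'))" using flat_at[OF j] Suc by simp
      have "off F (Suc j') \<le> n" using j(1) Suc by simp
      then have n1: "\<not> n < length (F 0)" using a by linarith
      have e3: "pre (F 0) (flat ?G) n = flat ?G (n - length (F 0))" using n1 by (simp add: pre_def)
      have e4: "n - off F (Suc j') = n - length (F 0) - off ?G j'" using a by simp
      show ?thesis using e1 e2 e3 e4 by simp
    qed
  next
    case False
    have n0: "\<not> n < length (F 0)"
    proof
      assume "n < length (F 0)"
      then have "n < off F (Suc 0)" using off_Suc[of F 0] by simp
      then show False using False by blast
    qed
    have "\<not> (\<exists>j. n - length (F 0) < off ?G (Suc j))"
    proof
      assume "\<exists>j. n - length (F 0) < off ?G (Suc j)"
      then obtain j where "n - length (F 0) < off ?G (Suc j)" by blast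
      then have "n < off F (Suc (Suc j))" using n0 off_Suc_shift[of F "Suc j"] by simp
      then show False using False by blast
    qed
    then have "flat ?G (n - length (F 0)) = False" by (rule flat_none)
    moreover have "flat F n = False" using False by (rule flat_none)
    ultimately show ?thesis using n0 by (simp add: pre_def)
  qed
qed

section \<open>Values\<close>

lemma term_le: "norm (of_bool b / 2 ^ Suc i :: real) \<le> (1/2)^Suc i"
  by (cases b) (auto simp: power_divide)

lemma summable_half: "summable (\<lambda>n. (1/2::real)^Suc n)"
  using power_half_series by (rule sums_summable)

lemma val_summable: "summable (\<lambda>i. of_bool (W i) / 2 ^ Suc i :: real)"
  by (rule summable_comparison_test'[OF summable_half, of 0]) (rule term_le)

lemma val_nonneg: "0 \<le> val_inf W"
  unfolding val_inf_def by (rule suminf_nonneg[OF val_summable]) auto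

lemma val_le1: "val_inf W \<le> 1"
proof -
  have "val_inf W \<le> (\<Sum>n. (1/2::real)^Suc n)"
    unfolding val_inf_def
    by (rule suminf_le[OF _ val_summable summable_half]) (use term_le in auto)
  also have "\<dots> = 1" using power_half_series by (simp add: sums_iff)
  finally show ?thesis .
qed

lemma val_pos: "W m \<Longrightarrow> 0 < val_inf W"
  unfolding val_inf_def by (rule suminf_pos2[OF val_summable, of _ m]) auto

lemma val_ones: "val_inf (\<lambda>_. True) = 1"
  unfolding val_inf_def using power_half_series by (simp add: sums_iff power_divide)

lemma val_fin_nonneg: "0 \<le> val_fin v"
  unfolding val_fin_def by (rule sum_nonneg) auto

lemma val_pre: "val_inf (pre u W) = val_fin u + val_inf W / 2 ^ length u"
proof -
  have "val_inf (pre u W) = (\<Sum>n. of_bool (pre u W (n + length u)) / 2 ^ Suc (n + length u))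
      + (\<Sum>i<length u. of_bool (pre u W i) / 2 ^ Suc i)"
    unfolding val_inf_def by (rule suminf_split_initial_segment[OF val_summable])
  also have "(\<Sum>i<length u. of_bool (pre u W i) / 2 ^ Suc i) = val_fin u"
    unfolding val_fin_def by (rule sum.cong) (auto simp: pre_def)
  also have "(\<Sum>n. of_bool (pre u W (n + length u)) / 2 ^ Suc (n + length u))
      = (\<Sum>n. (of_bool (W n) / 2 ^ Suc n) / 2 ^ length u :: real)"
    by (simp add: pre_def power_add mult.assoc)
  also have "\<dots> = val_inf W / 2 ^ length u"
    unfolding val_inf_def by (rule suminf_divide[OF val_summable])
  finally show ?thesis by simp
qed

lemma val_fin_snoc: "val_fin (v @ [b]) = val_fin v + of_bool b / 2 ^ Suc (length v)"
  unfolding val_fin_def by (simp add: nth_append)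

lemma val_cyl:
  "val_fin u \<le> val_inf (pre u W)" "val_inf (pre u W) \<le> val_fin u + 1 / 2 ^ length u"
  using val_pre[of u W] val_nonneg[of W] val_le1[of W]
  by (auto simp: divide_right_mono)

lemma approx_exists:
  assumes "0 \<le> y" "y \<le> 1"
  shows "\<exists>v. length v = L \<and> val_fin v \<le> y \<and> y \<le> val_fin v + 1 / 2 ^ L"
proof (induction L)
  case 0 then show ?case using assms by (auto intro: exI[of _ "[]"] simp: val_fin_def)
next
  case (Suc L)
  then obtain v where v: "length v = L" "val_fin v \<le> y" "y \<le> val_fin v + 1 / 2 ^ L" by blast
  show ?case
  proof (cases "val_fin v + 1 / 2 ^ Suc L \<le> y")
    case True
    then show ?thesis using v by (intro exI[of _ "v @ [True]"]) (auto simp: val_fin_snoc)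
  next
    case False
    then show ?thesis using v by (intro exI[of _ "v @ [False]"]) (auto simp: val_fin_snoc)
  qed
qed

lemma shift_decomp: "pre (map W [0..<d]) (\<lambda>n. W (n + d)) = W"
  by (auto simp: pre_def fun_eq_iff)

lemma val_shift: "val_inf W = val_fin (map W [0..<d]) + val_inf (\<lambda>n. W (n + d)) / 2 ^ d"
  using val_pre[of "map W [0..<d]" "\<lambda>n. W (n + d)"] unfolding shift_decomp by simp

lemma io_shift: "io W \<Longrightarrow> io (\<lambda>n. W (n + d))"
  unfolding io_def
proof
  fix n assume "\<forall>n. \<exists>m>n. W m"
  then obtain m where "m > n + d" "W m" by blast
  then show "\<exists>m>n. W (m + d)" by (intro exI[of _ "m - d"]) auto
qed

lemma val_first_gt:
  assumes "io W" "W 0" "\<not> V 0"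
  shows "val_inf V < val_inf W"
proof -
  have dW: "val_inf W = val_fin [True] + val_inf (\<lambda>n. W (n + 1)) / 2"
    using val_shift[of W 1] assms(2) by simp
  have dV: "val_inf V = val_fin [False] + val_inf (\<lambda>n. V (n + 1)) / 2"
    using val_shift[of V 1] assms(3) by simp
  obtain m where "W (m + 1)" using io_shift[OF assms(1), of 1] unfolding io_def by blast
  then have "0 < val_inf (\<lambda>n. W (n + 1))" by (rule val_pos)
  moreover have "val_inf (\<lambda>n. V (n + 1)) \<le> 1" by (rule val_le1)
  ultimately show ?thesis using dW dV by (simp add: val_fin_def)
qed

lemma val_inj:
  assumes "io W" "io V" "val_inf W = val_inf V"
  shows "W = V"
proof (rule ccontr)
  assume "W \<noteq> V"
  then have ex: "\<exists>n. W n \<noteq> V n" by (auto simp: fun_eq_iff)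
  define d where "d = (LEAST n. W n \<noteq> V n)"
  have dd: "W d \<noteq> V d" unfolding d_def by (rule LeastI_ex[OF ex])
  have pr: "map W [0..<d] = map V [0..<d]"
  proof (rule map_cong[OF refl])
    fix n assume "n \<in> set [0..<d]"
    then have "n < (LEAST n. W n \<noteq> V n)" by (simp add: d_def)
    then have "\<not> (W n \<noteq> V n)" by (rule not_less_Least)
    then show "W n = V n" by simp
  qed
  have "val_inf (\<lambda>n. W (n + d)) = val_inf (\<lambda>n. V (n + d))"
    using assms(3) val_shift[of W d] val_shift[of V d] pr by simp
  moreover have "val_inf (\<lambda>n. W (n + d)) \<noteq> val_inf (\<lambda>n. V (n + d))"
  proof (cases "W d")
    case True
    then show ?thesis using val_first_gt[OF io_shift[OF assms(1)], of d "\<lambda>n. V (n + d)"] dd by auto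
  next
    case False
    then show ?thesis using val_first_gt[OF io_shift[OF assms(2)], of d "\<lambda>n. W (n + d)"] dd by auto
  qed
  ultimately show False by simp
qed

lemma tilde_val:
  assumes "io W" shows "tilde (val_inf W) = W"
  unfolding tilde_def
proof (rule the_equality)
  show "(\<forall>n. \<exists>m>n. W m) \<and> val_inf W = val_inf W" using assms by (simp add: io_def)
next
  fix x assume "(\<forall>n. \<exists>m>n. x m) \<and> val_inf x = val_inf W"
  then have "io x" "val_inf x = val_inf W" by (auto simp: io_def)
  then show "x = W" using val_inj[OF _ assms] by blast
qed



lemma sum_lessThan_add:
  fixes a b :: nat and g :: "nat \<Rightarrow> 'c::comm_monoid_add"
  shows "(\<Sum>n<a+b. g n) = (\<Sum>n<a. g n) + (\<Sum>i<b. g (a+i))"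
  by (induction b) (auto simp: add.assoc)

lemma flat_partial:
  "(\<Sum>j<J. val_fin (F j) / 2 ^ off F j) = (\<Sum>n<off F J. of_bool (flat F n) / 2 ^ Suc n :: real)"
proof (induction J)
  case 0 then show ?case by simp
next
  case (Suc J)
  have "(\<Sum>n<off F (Suc J). of_bool (flat F n) / 2 ^ Suc n :: real)
    = (\<Sum>n<off F J. of_bool (flat F n) / 2 ^ Suc n)
      + (\<Sum>i<length (F J). of_bool (flat F (off F J + i)) / 2 ^ Suc (off F J + i))"
    unfolding off_Suc by (rule sum_lessThan_add)
  also have "(\<Sum>i<length (F J). of_bool (flat F (off F J + i)) / 2 ^ Suc (off F J + i) :: real)
     = (\<Sum>i<length (F J). (of_bool (F J ! i) / 2 ^ Suc i) / 2 ^ off F J)"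
  proof (rule sum.cong)
    fix i assume "i \<in> {..<length (F J)}"
    then have "flat F (off F J + i) = F J ! i" using flat_at[of F J "off F J + i"] by (simp add: off_Suc)
    then show "of_bool (flat F (off F J + i)) / 2 ^ Suc (off F J + i) = (of_bool (F J ! i) / 2 ^ Suc i) / (2::real) ^ off F J"
      by (simp add: power_add mult_ac)
  qed simp
  also have "\<dots> = val_fin (F J) / 2 ^ off F J"
    unfolding val_fin_def by (simp add: sum_divide_distrib)
  finally show ?case using Suc by simp
qed

lemma off_unbounded:
  assumes "io (flat F)"
  shows "filterlim (off F) at_top sequentially"
proof -
  have ub: "\<exists>J. B \<le> off F J" for B
  proof (rule ccontr)
    assume "\<not> (\<exists>J. B \<le> off F J)"
    then have lt: "\<forall>J. off F J < B" by (metis not_le)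
    obtain m where m: "m > B" "flat F m" using assms unfolding io_def by blast
    have "\<not> (\<exists>j. m < off F (Suc j))" using lt m(1) less_trans by (metis not_less_iff_gr_or_eq)
    then have "flat F m = False" by (rule flat_none)
    then show False using m by simp
  qed
  show ?thesis unfolding filterlim_at_top eventually_sequentially
  proof
    fix Z
    obtain J where "Z \<le> off F J" using ub by blast
    then show "\<exists>N. \<forall>n\<ge>N. Z \<le> off F n" using off_mono[of J _ F] le_trans by blast
  qed
qed

lemma flat_val:
  assumes "io (flat F)"
  shows "(\<Sum>j. val_fin (F j) / 2 ^ off F j) = val_inf (flat F)"
proof -
  have "(\<lambda>N. \<Sum>n<N. of_bool (flat F n) / 2 ^ Suc n :: real) \<longlonglongrightarrow> val_inf (flat F)"
    unfolding val_inf_def by (rule summable_LIMSEQ[OF val_summable])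
  then have "(\<lambda>J. \<Sum>n<off F J. of_bool (flat F n) / 2 ^ Suc n :: real) \<longlonglongrightarrow> val_inf (flat F)"
    by (rule filterlim_compose[OF _ off_unbounded[OF assms]])
  then have "(\<lambda>J. \<Sum>j<J. val_fin (F j) / 2 ^ off F j) \<longlonglongrightarrow> val_inf (flat F)"
    by (simp add: flat_partial)
  then have "(\<lambda>j. val_fin (F j) / 2 ^ off F j) sums val_inf (flat F)"
    by (simp add: sums_def)
  then show ?thesis by (simp add: sums_iff)
qed

section \<open>Fixed point\<close>

lemma fixpoint:
  fixes \<Psi> :: "('i \<Rightarrow> nat \<Rightarrow> 'b) \<Rightarrow> ('i \<Rightarrow> nat \<Rightarrow> 'b)"
  assumes contr: "\<And>L R R'. (\<forall>i. agree L (R i) (R' i)) \<Longrightarrow> (\<forall>i. agree (Suc L) (\<Psi> R i) (\<Psi> R' i))"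
  shows "\<exists>R. \<Psi> R = R"
proof -
  define Z where "Z j = (\<Psi> ^^ j) (\<lambda>_ _. undefined)" for j
  have ZS: "Z (Suc j) = \<Psi> (Z j)" for j by (simp add: Z_def)
  have step: "\<forall>i. agree j (Z j i) (Z (Suc j) i)" for j
  proof (induction j)
    case 0 then show ?case by (simp add: agree_def)
  next
    case (Suc j) then show ?case using contr[of j "Z j" "Z (Suc j)"] ZS by simp
  qed
  have far: "\<forall>i. agree j (Z j i) (Z (j + d) i)" for j d
  proof (induction d)
    case 0 then show ?case by (simp add: agree_def)
  next
    case (Suc d)
    have "\<forall>i. agree j (Z (j + d) i) (Z (Suc (j + d)) i)"
      using step[of "j + d"] by (auto simp: agree_def)
    then show ?case using Suc by (simp add: agree_def)
  qed
  have far': "Z m i n = Z m' i n" if "n < m" "m \<le> m'" for m m' i n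
    using far[of m "m' - m"] that by (auto simp: agree_def)
  define R where "R i n = Z (Suc n) i n" for i n
  have RZ2: "\<forall>i. agree L (R i) (Z L i)" for L
    using far'[of _ "Suc _" L] by (auto simp: agree_def R_def)
  have "\<Psi> R i n = R i n" for i n
  proof -
    have "\<forall>i. agree (Suc n) (\<Psi> R i) (\<Psi> (Z n) i)" using contr[of n R "Z n"] RZ2[of n] by blast
    then have "\<Psi> R i n = Z (Suc n) i n" using ZS by (simp add: agree_def)
    then show ?thesis by (simp add: R_def)
  qed
  then show ?thesis by (intro exI[of _ R]) (auto simp: fun_eq_iff)
qed



lemma mod_pad_aux: "0 < (k::nat) \<Longrightarrow> (a + (k - a mod k) mod k) mod k = 0"
proof (cases "a mod k = 0")
  case True then show ?thesis by simp
next
  case False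
  assume k: "0 < k"
  have lt: "k - a mod k < k" using False k by simp
  then have "(k - a mod k) mod k = k - a mod k" by simp
  moreover have "a + (k - a mod k) = k * (a div k) + k"
  proof -
    have e: "k * (a div k) + a mod k = a" by (rule mult_div_mod_eq)
    have "a mod k < k" using k by simp
    with e show ?thesis by linarith
  qed
  ultimately show ?thesis by simp
qed

locale subst =
  fixes k :: nat and s :: "nat \<Rightarrow> bool \<Rightarrow> bool list"
  assumes k2: "k \<ge> 2" and ce: "completely_erasing k s" and opt: "optimal k s"
begin

lemma kpos: "0 < k" using k2 by simp

primrec extp :: "nat \<Rightarrow> bool list \<Rightarrow> bool list" where
  "extp p [] = []"
| "extp p (a # u) = s (p mod k) a @ extp (Suc p) u"

lemma extp_conc: "concat (map (\<lambda>j. s ((p + j) mod k) (u ! j)) [0..<length u]) = extp p u"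
proof (induction u arbitrary: p)
  case Nil then show ?case by simp
next
  case (Cons a u)
  have "[0..<length (a#u)] = 0 # map Suc [0..<length u]"
    by (simp add: upt_conv_Cons map_Suc_upt del: upt_Suc)
  then have "concat (map (\<lambda>j. s ((p + j) mod k) ((a#u) ! j)) [0..<length (a#u)])
     = s (p mod k) a @ concat (map (\<lambda>j. s ((Suc p + j) mod k) (u ! j)) [0..<length u])"
    by (simp add: o_def del: upt_Suc)
  then show ?case using Cons[of "Suc p"] by simp
qed

lemma ext_fin_extp: "ext_fin k s u = extp 0 u"
  unfolding ext_fin_def using extp_conc[of 0 u] by simp

lemma blk_extp: assumes "length b = k" shows "blk k s b = extp 0 b"
proof -
  have "map (\<lambda>i. s i (b!i)) [0..<k] = map (\<lambda>j. s ((0+j) mod k) (b!j)) [0..<length b]"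
    using assms by (auto intro: map_cong)
  then show ?thesis unfolding blk_def using extp_conc[of 0 b] by simp
qed

lemma extp_append: "extp p (u @ w) = extp p u @ extp (p + length u) w"
  by (induction u arbitrary: p) auto

lemma extp_mod: "extp p u = extp (p mod k) u"
proof -
  have "map (\<lambda>j. s ((p + j) mod k) (u ! j)) [0..<length u] = map (\<lambda>j. s ((p mod k + j) mod k) (u ! j)) [0..<length u]"
    by (simp add: mod_add_left_eq)
  then show ?thesis using extp_conc[of p u] extp_conc[of "p mod k" u] by metis
qed

definition sigp :: "nat \<Rightarrow> (nat \<Rightarrow> bool) \<Rightarrow> nat \<Rightarrow> bool" where
  "sigp p X = flat (\<lambda>j. s ((p + j) mod k) (X j))"

lemma sigp_mod: "sigp p = sigp (p mod k)"
  unfolding sigp_def by (simp add: mod_add_left_eq fun_eq_iff)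

lemma sigp_cons: "sigp p (pre [a] W) = pre (s (p mod k) a) (sigp (Suc p) W)"
  unfolding sigp_def by (subst flat_pre) (simp add: pre_def)

lemma sigp_pre: "sigp p (pre u W) = pre (extp p u) (sigp (p + length u) W)"
proof (induction u arbitrary: p)
  case Nil then show ?case by simp
next
  case (Cons a u)
  show ?case
    by (subst pre_Cons, subst sigp_cons, subst Cons) (simp add: pre_append[symmetric])
qed

definition we :: "bool list" where "we = w_eps k s"

lemma we_props: "length we = k" "blk k s we = []"
proof -
  have ex: "\<exists>!w. length w = k \<and> blk k s w = []" using ce by (simp add: completely_erasing_def erasing_def)
  have "length we = k \<and> blk k s we = []" unfolding we_def w_eps_def by (rule theI'[OF ex])
  then show "length we = k" "blk k s we = []" by auto
qed

lemma we_erase: "i < k \<Longrightarrow> s i (we ! i) = []"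
  using we_props(2) unfolding blk_def by auto

lemma extp_we: "p mod k = 0 \<Longrightarrow> extp p we = []"
  using extp_mod[of p we] blk_extp[OF we_props(1)] we_props(2) by simp

lemma extp_rep: "p mod k = 0 \<Longrightarrow> extp p (concat (replicate n we)) = []"
proof (induction n arbitrary: p)
  case 0 then show ?case by simp
next
  case (Suc n)
  have "(p + k) mod k = 0" using Suc.prems by simp
  then show ?case using Suc extp_we[of p] by (simp add: extp_append we_props(1))
qed

lemma len_rep: "length (concat (replicate n we)) = n * k"
  by (induction n) (auto simp: we_props(1))

definition pad :: "bool list \<Rightarrow> bool list" where
  "pad u = map (\<lambda>j. we ! ((length u + j) mod k)) [0..<(k - length u mod k) mod k]"

lemma extp_pad: "extp (length u) (pad u) = []"
proof -
  have "concat (map (\<lambda>j. s ((length u + j) mod k) (pad u ! j)) [0..<length (pad u)]) = []"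
    using kpos by (auto simp: pad_def we_erase)
  then show ?thesis using extp_conc by simp
qed

lemma len_pad: "length (u @ pad u) mod k = 0"
  using mod_pad_aux[OF kpos, of "length u"] by (simp add: pad_def)

lemma extp_upad: "extp 0 (u @ pad u) = ext_fin k s u"
  using extp_pad[of u] by (simp add: extp_append ext_fin_extp)

definition Lm :: nat where
  "Lm = sum_list (map (\<lambda>i. length (s i True) + length (s i False)) [0..<k])"

lemma blk_len: "length (blk k s b) \<le> Lm"
proof -
  have "length (blk k s b) = sum_list (map (\<lambda>i. length (s i (b!i))) [0..<k])"
    by (simp add: blk_def length_concat o_def)
  also have "\<dots> \<le> Lm" unfolding Lm_def
  proof (rule sum_list_mono)
    fix i show "length (s i (b!i)) \<le> length (s i True) + length (s i False)" by (cases "b ! i") auto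
  qed
  finally show ?thesis .
qed

lemma opt_first: "\<exists>\<beta>. length \<beta> = k \<and> blk k s \<beta> \<noteq> [] \<and> (\<forall>i<length (blk k s \<beta>). blk k s \<beta> ! i = Y i)"
proof -
  obtain b :: "nat \<Rightarrow> bool list" where b: "\<forall>m. length (b m) = k \<and> blk k s (b m) \<noteq> []"
    "\<forall>m i. i < length (blk k s (b m)) \<longrightarrow> Y ((\<Sum>l<m. length (blk k s (b l))) + i) = blk k s (b m) ! i"
    using opt unfolding optimal_def by blast
  have "\<forall>i<length (blk k s (b 0)). blk k s (b 0) ! i = Y i"
  proof (intro allI impI)
    fix i assume "i < length (blk k s (b 0))"
    then have "Y ((\<Sum>l<0. length (blk k s (b l))) + i) = blk k s (b 0) ! i" using b(2) by blast
    then show "blk k s (b 0) ! i = Y i" by simp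
  qed
  then show ?thesis using b(1) by (intro exI[of _ "b 0"]) auto
qed

definition good :: "bool list \<Rightarrow> bool list \<Rightarrow> bool" where
  "good \<beta> x \<longleftrightarrow> length \<beta> = k \<and> blk k s \<beta> \<noteq> [] \<and> length (blk k s \<beta>) \<le> length x
     \<and> (\<forall>i<length (blk k s \<beta>). blk k s \<beta> ! i = x ! i)"

definition bt :: "(nat \<Rightarrow> bool) \<Rightarrow> bool list" where
  "bt Y = (SOME \<beta>. good \<beta> (map Y [0..<Lm]))"

lemma bt_good: "good (bt Y) (map Y [0..<Lm])"
proof -
  obtain \<beta> where b: "length \<beta> = k" "blk k s \<beta> \<noteq> []" "\<forall>i<length (blk k s \<beta>). blk k s \<beta> ! i = Y i"
    using opt_first by blast
  have "good \<beta> (map Y [0..<Lm])" using b blk_len[of \<beta>] by (auto simp: good_def)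
  then show ?thesis unfolding bt_def by (rule someI)
qed

definition ell :: "(nat \<Rightarrow> bool) \<Rightarrow> nat" where "ell Y = length (blk k s (bt Y))"

lemma bt_props: "length (bt Y) = k" "blk k s (bt Y) \<noteq> []" "ell Y \<le> Lm" "1 \<le> ell Y"
  "\<And>i. i < ell Y \<Longrightarrow> blk k s (bt Y) ! i = Y i"
  using bt_good[of Y] by (auto simp: good_def ell_def Suc_le_eq)

lemma Lm_pos: "1 \<le> Lm" using bt_props(3,4) le_trans by blast

definition rest :: "(nat \<Rightarrow> bool) \<Rightarrow> nat \<Rightarrow> bool" where "rest Y = (\<lambda>n. Y (n + ell Y))"

definition Qc :: nat where "Qc = Suc Lm * k"
definition eM :: "bool list" where "eM = concat (replicate Lm we)"

lemma len_eM: "length eM = Lm * k" by (simp add: eM_def len_rep)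
lemma Qc_pos: "0 < Qc" using kpos by (simp add: Qc_def)
lemma len_blockQ: "length (eM @ bt Y) = Qc" by (simp add: len_eM bt_props(1) Qc_def)
lemma len_block2: "length eM + length (bt Y) = Qc" using len_blockQ[of Y] by simp

definition Pp :: "(nat \<Rightarrow> bool) \<Rightarrow> nat \<Rightarrow> bool" where
  "Pp Y = (\<lambda>n. (eM @ bt ((rest ^^ (n div Qc)) Y)) ! (n mod Qc))"

lemma Pp_unfold: "Pp Y = pre (eM @ bt Y) (Pp (rest Y))"
proof
  fix n
  show "Pp Y n = pre (eM @ bt Y) (Pp (rest Y)) n"
  proof (cases "n < Qc")
    case True then show ?thesis by (simp add: Pp_def pre_def len_block2)
  next
    case False
    then have "n div Qc = Suc ((n - Qc) div Qc)" "n mod Qc = (n - Qc) mod Qc"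
      using Qc_pos False by (auto intro: le_div_geq le_mod_geq)
    then show ?thesis using False by (simp add: Pp_def pre_def len_block2 funpow_swap1)
  qed
qed

lemma extp_block: "extp 0 (eM @ bt Y) = blk k s (bt Y)"
proof -
  have "extp 0 (eM @ bt Y) = extp 0 eM @ extp (length eM) (bt Y)" using extp_append[of 0 eM "bt Y"] by simp
  also have "extp 0 eM = []" unfolding eM_def by (rule extp_rep) simp
  also have "extp (length eM) (bt Y) = extp 0 (bt Y)" using extp_mod[of "length eM"] by (simp add: len_eM)
  finally show ?thesis using blk_extp[OF bt_props(1)] by simp
qed

lemma sig_Pp_step: "sigp 0 (Pp Y) = pre (blk k s (bt Y)) (sigp 0 (Pp (rest Y)))"
proof -
  have "sigp 0 (Pp Y) = pre (extp 0 (eM @ bt Y)) (sigp (length (eM @ bt Y)) (Pp (rest Y)))"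
    by (subst Pp_unfold) (simp add: sigp_pre)
  also have "sigp (length (eM @ bt Y)) = sigp 0"
    using sigp_mod[of "length (eM @ bt Y)"] unfolding len_blockQ by (simp add: Qc_def)
  finally show ?thesis by (simp add: extp_block)
qed

lemma sig_Pp: "sigp 0 (Pp Y) = Y"
proof -
  have "\<forall>Y. sigp 0 (Pp Y) n = Y n" for n
  proof (induction n rule: less_induct)
    case (less n)
    show ?case
    proof
      fix Y
      show "sigp 0 (Pp Y) n = Y n"
      proof (cases "n < ell Y")
        case True then show ?thesis by (subst sig_Pp_step) (simp add: pre_def bt_props(5) ell_def[symmetric])
      next
        case False
        have "n - ell Y < n" using False bt_props(4)[of Y] by linarith
        then have "sigp 0 (Pp (rest Y)) (n - ell Y) = rest Y (n - ell Y)" using less by blast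
        then show ?thesis using False by (subst sig_Pp_step) (simp add: pre_def ell_def[symmetric] rest_def)
      qed
    qed
  qed
  then show ?thesis by auto
qed

end


context subst
begin

lemma bt_agree:
  assumes "agree L Y Y'" "Lm \<le> L"
  shows "bt Y = bt Y'" "agree (L - Lm) (rest Y) (rest Y')"
proof -
  have "map Y [0..<Lm] = map Y' [0..<Lm]" using assms by (auto simp: agree_def)
  then show bb: "bt Y = bt Y'" unfolding bt_def by (rule arg_cong)
  then have "ell Y = ell Y'" by (simp add: ell_def)
  then show "agree (L - Lm) (rest Y) (rest Y')"
    using assms bt_props(3)[of Y] by (auto simp: agree_def rest_def)
qed

lemma bt_agree_iter:
  assumes "agree L Y Y'" "Suc m * Lm \<le> L"
  shows "bt ((rest ^^ m) Y) = bt ((rest ^^ m) Y')"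
  using assms
proof (induction m arbitrary: Y Y' L)
  case 0 then show ?case using bt_agree(1)[of L Y Y'] by simp
next
  case (Suc m)
  have a: "agree (L - Lm) (rest Y) (rest Y')" using bt_agree(2)[OF Suc.prems(1)] Suc.prems(2) by simp
  have "Suc m * Lm \<le> L - Lm" using Suc.prems(2) by simp
  then have "bt ((rest ^^ m) (rest Y)) = bt ((rest ^^ m) (rest Y'))" using Suc.IH[OF a] by simp
  then show ?case by (simp add: funpow_swap1)
qed

lemma Pp_agree:
  assumes "agree L Y Y'"
  shows "agree L (Pp Y) (Pp Y')"
  unfolding agree_def
proof (intro allI impI)
  fix n assume n: "n < L"
  define m where "m = n div Qc"
  define r where "r = n mod Qc"
  have nm: "n = m * Qc + r" unfolding m_def r_def by (metis div_mult_mod_eq)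
  show "Pp Y n = Pp Y' n"
  proof (cases "r < Lm * k")
    case True
    then show ?thesis by (simp add: Pp_def m_def[symmetric] r_def[symmetric] nth_append len_eM)
  next
    case False
    have "Lm \<le> Lm * k" using kpos by simp
    then have r1: "Lm \<le> r" using False by linarith
    have "Lm * k \<le> Qc" by (simp add: Qc_def)
    then have "Lm \<le> Qc" using \<open>Lm \<le> Lm * k\<close> by linarith
    then have "m * Lm \<le> m * Qc" by (rule mult_le_mono2)
    moreover have "Suc m * Lm = Lm + m * Lm" by simp
    ultimately have "Suc m * Lm \<le> L" using nm r1 n by linarith
    then have "bt ((rest ^^ m) Y) = bt ((rest ^^ m) Y')" by (rule bt_agree_iter[OF assms])
    then show ?thesis by (simp add: Pp_def m_def[symmetric] r_def[symmetric])
  qed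
qed

definition E :: "nat \<Rightarrow> bool" where "E = (\<lambda>j. we ! (j mod k))"

lemma Pp_block: "j < k \<Longrightarrow> Pp Z (Lm * k + j) = bt Z ! j"
proof -
  assume j: "j < k"
  have "Lm * k + j < Qc" using j by (simp add: Qc_def)
  then show ?thesis by (simp add: Pp_def nth_append len_eM)
qed

lemma Pp_nonper:
  assumes "length A mod k = 0"
  shows "pre A (Pp Z) \<noteq> E"
proof
  assume eq: "pre A (Pp Z) = E"
  have "bt Z ! j = we ! j" if j: "j < k" for j
  proof -
    have "pre A (Pp Z) (length A + (Lm * k + j)) = bt Z ! j" using Pp_block[OF j] by (simp add: pre_def)
    moreover have "E (length A + (Lm * k + j)) = we ! j"
      using assms j by (simp add: E_def mod_add_left_eq[symmetric])
    ultimately show ?thesis using eq by simp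
  qed
  then have "bt Z = we" using bt_props(1) we_props(1) by (intro nth_equalityI) auto
  then show False using bt_props(2)[of Z] we_props(2) by simp
qed

lemma dmQ: "j < Qc \<Longrightarrow> (a * Qc + j) div Qc = a" "j < Qc \<Longrightarrow> (a * Qc + j) mod Qc = j"
  using Qc_pos by auto

lemma k_lt_Q: "j < k \<Longrightarrow> j < Qc" by (simp add: Qc_def)

lemma Pp_io: "io (Pp Y)"
  unfolding io_def
proof
  fix n
  show "\<exists>m>n. Pp Y m"
  proof (cases "\<exists>j<k. we ! j")
    case True
    then obtain j where j: "j < k" "we ! j" by blast
    define m where "m = Suc n * Qc + j"
    have "m div Qc = Suc n" "m mod Qc = j" unfolding m_def using dmQ[OF k_lt_Q[OF j(1)]] by blast+
    moreover have "(eM @ bt ((rest ^^ Suc n) Y)) ! j = we ! j"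
    proof -
      have "j < length eM" using j Lm_pos len_eM by (metis le_trans mult_le_mono1 mult_1 not_le)
      then have "(eM @ bt ((rest ^^ Suc n) Y)) ! j = eM ! j" by (simp add: nth_append)
      also have "eM ! j = we ! j"
      proof -
        obtain L' where "Lm = Suc L'" using Lm_pos by (cases Lm) auto
        then show ?thesis using j by (simp add: eM_def nth_append we_props(1))
      qed
      finally show ?thesis .
    qed
    moreover have "n < m"
    proof -
      have "1 \<le> Qc" using Qc_pos by simp
      then have "Suc n * 1 \<le> Suc n * Qc" by (rule mult_le_mono2)
      then have "Suc n \<le> Suc n * Qc" by (simp only: mult_1_right)
      then show ?thesis unfolding m_def by linarith
    qed
    ultimately show ?thesis using j by (intro exI[of _ m]) (simp add: Pp_def)
  next
    case False
    let ?b = "bt ((rest ^^ Suc n) Y)"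
    have "\<exists>j<k. ?b ! j"
    proof (rule ccontr)
      assume "\<not> (\<exists>j<k. ?b ! j)"
      then have "?b = we" using False bt_props(1) we_props(1) by (intro nth_equalityI) auto
      then show False using bt_props(2)[of "(rest ^^ Suc n) Y"] we_props(2) by simp
    qed
    then obtain j where j: "j < k" "?b ! j" by blast
    define m where "m = Suc n * Qc + (Lm * k + j)"
    have lt: "Lm * k + j < Qc" using j by (simp add: Qc_def)
    then have "m div Qc = Suc n" "m mod Qc = Lm * k + j" unfolding m_def using dmQ by blast+
    moreover have "n < m"
    proof -
      have "1 \<le> Qc" using Qc_pos by simp
      then have "Suc n * 1 \<le> Suc n * Qc" by (rule mult_le_mono2)
      then have "Suc n \<le> Suc n * Qc" by (simp only: mult_1_right)
      then show ?thesis unfolding m_def by linarith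
    qed
    ultimately show ?thesis using j by (intro exI[of _ m]) (simp add: Pp_def nth_append len_eM)
  qed
qed

end


lemma nat_lt_pow2: "n < (2::nat) ^ n"
proof (induction n)
  case 0 then show ?case by simp
next
  case (Suc n)
  have "1 \<le> (2::nat) ^ n" by simp
  then show ?case using Suc.IH by (simp only: power_Suc)
qed

lemma small_pow:
  assumes "0 < (e::real)" shows "\<exists>L>0. 1 / 2 ^ L < e"
proof -
  obtain n where n: "1 / e < real n" using reals_Archimedean2 by blast
  have "real n < 2 ^ n" using nat_lt_pow2[of n] by (metis of_nat_less_iff of_nat_numeral of_nat_power)
  then have "1 / e < 2 ^ n" using n by linarith
  then have a: "1 / 2 ^ n < e" using assms by (simp add: field_simps)
  have "1 / 2 ^ Suc n \<le> (1 / 2 ^ n :: real)" by (simp add: field_simps)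
  then have "1 / 2 ^ Suc n < e" using a by linarith
  then show ?thesis by blast
qed

context subst
begin

definition Nv :: "bool list \<Rightarrow> nat" where "Nv v = (LEAST n. (ext_fin k s ^^ n) v = [])"
definition uu :: "nat \<Rightarrow> bool list \<Rightarrow> bool list" where "uu i v = (ext_fin k s ^^ i) v"

lemma Nv_prop: "uu (Nv v) v = []"
proof -
  have ex: "\<exists>n. (ext_fin k s ^^ n) v = []" using ce by (simp add: completely_erasing_def)
  show ?thesis unfolding uu_def Nv_def by (rule LeastI_ex[OF ex])
qed

lemma Nv_pos: "v \<noteq> [] \<Longrightarrow> 0 < Nv v"
  using Nv_prop[of v] by (cases "Nv v") (auto simp: uu_def)

lemma uu_Suc: "uu (Suc i) v = ext_fin k s (uu i v)" by (simp add: uu_def)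
lemma uu_0: "uu 0 v = v" by (simp add: uu_def)

primrec Rec :: "bool list \<Rightarrow> (nat \<Rightarrow> bool) \<Rightarrow> nat \<Rightarrow> nat \<Rightarrow> bool" where
  "Rec v w 0 = w"
| "Rec v w (Suc m) = pre (pad (uu (Nv v - Suc m) v)) (Pp (Rec v w m))"

definition Yw :: "bool list \<Rightarrow> (nat \<Rightarrow> bool) \<Rightarrow> nat \<Rightarrow> nat \<Rightarrow> bool" where
  "Yw v w i = Rec v w (Nv v - i)"
definition Xw :: "bool list \<Rightarrow> (nat \<Rightarrow> bool) \<Rightarrow> nat \<Rightarrow> nat \<Rightarrow> bool" where
  "Xw v w i = pre (uu i v) (Yw v w i)"
definition Phi :: "bool list \<Rightarrow> (nat \<Rightarrow> bool) \<Rightarrow> nat \<Rightarrow> bool" where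
  "Phi v w = Xw v w 0"

lemma Yw_step:
  assumes i: "i < Nv v"
  shows "Yw v w i = pre (pad (uu i v)) (Pp (Yw v w (Suc i)))"
proof -
  have a: "Nv v - i = Suc (Nv v - Suc i)" using i by simp
  have b: "Nv v - Suc (Nv v - Suc i) = i" using i by simp
  have "Yw v w i = Rec v w (Suc (Nv v - Suc i))" unfolding Yw_def a ..
  also have "\<dots> = pre (pad (uu i v)) (Pp (Rec v w (Nv v - Suc i)))" by (simp only: Rec.simps b)
  finally show ?thesis by (simp only: Yw_def)
qed

lemma Xw_step: "i < Nv v \<Longrightarrow> Xw v w i = pre (uu i v @ pad (uu i v)) (Pp (Yw v w (Suc i)))"
  by (simp add: Xw_def Yw_step pre_append)

lemma Xw_N: "Xw v w (Nv v) = w" by (simp add: Xw_def Yw_def Nv_prop)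

lemma sig_Xw:
  assumes i: "i < Nv v"
  shows "sigp 0 (Xw v w i) = Xw v w (Suc i)"
proof -
  let ?A = "uu i v @ pad (uu i v)"
  have "sigp 0 (Xw v w i) = pre (extp 0 ?A) (sigp (length ?A) (Pp (Yw v w (Suc i))))"
    unfolding Xw_step[OF i] using sigp_pre[of 0 ?A] by simp
  also have "sigp (length ?A) = sigp 0" using sigp_mod[of "length ?A"] len_pad[of "uu i v"] by simp
  finally show ?thesis by (simp add: extp_upad sig_Pp Xw_def uu_Suc)
qed

lemma io_Xw: "i < Nv v \<Longrightarrow> io (Xw v w i)"
  by (simp add: Xw_step io_pre Pp_io)

lemma nonper_Xw: assumes "i < Nv v" shows "Xw v w i \<noteq> E"
  unfolding Xw_step[OF assms] by (rule Pp_nonper[OF len_pad])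

lemma Rec_agree: "agree L w w' \<Longrightarrow> agree L (Rec v w m) (Rec v w' m)"
proof (induction m)
  case 0 then show ?case by simp
next
  case (Suc m)
  then have "agree L (Pp (Rec v w m)) (Pp (Rec v w' m))" by (intro Pp_agree) 
  then have "agree (L + length (pad (uu (Nv v - Suc m) v))) (pre (pad (uu (Nv v - Suc m) v)) (Pp (Rec v w m)))
         (pre (pad (uu (Nv v - Suc m) v)) (Pp (Rec v w' m)))" by (rule agree_pre)
  then show ?case by (simp add: agree_mono)
qed

lemma Phi_pre: "Phi v w = pre v (Yw v w 0)" by (simp add: Phi_def Xw_def uu_0)

lemma Phi_agree: "agree L w w' \<Longrightarrow> agree (L + length v) (Phi v w) (Phi v w')"
  unfolding Phi_pre Yw_def by (intro agree_pre Rec_agree)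

lemma f_step:
  assumes "io X" "X \<noteq> E" "io (sigp 0 X)"
  shows "f_sigma k s (val_inf X) = val_inf (sigp 0 X)"
proof -
  obtain m where "X m" using assms(1) unfolding io_def by blast
  then have pos: "0 < val_inf X" by (rule val_pos)
  have t: "tilde (val_inf X) = X" using assms(1) by (rule tilde_val)
  define F where "F = (\<lambda>j. s (j mod k) (X j))"
  have sF: "sigp 0 X = flat F" by (simp add: sigp_def F_def)
  have oF: "pre_len k s X = off F" by (simp add: fun_eq_iff pre_len_def off_def F_def)
  have "val_sub k s X = (\<Sum>j. val_fin (F j) / 2 ^ off F j)"
    by (simp add: val_sub_def oF F_def)
  also have "\<dots> = val_inf (sigp 0 X)" unfolding sF by (rule flat_val) (use assms(3) sF in simp)
  finally have vs: "val_sub k s X = val_inf (sigp 0 X)" .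
  have "tilde (val_inf X) \<noteq> (\<lambda>j. w_eps k s ! (j mod k))" using t assms(2) by (simp add: E_def we_def)
  then show ?thesis unfolding f_sigma_def using pos val_le1[of X] t vs by simp
qed

lemma iter_Phi:
  assumes "io w"
  shows "i \<le> Nv v \<Longrightarrow> (f_sigma k s ^^ i) (val_inf (Phi v w)) = val_inf (Xw v w i)"
proof (induction i)
  case 0 then show ?case by (simp add: Phi_def)
next
  case (Suc i)
  then have i: "i < Nv v" by simp
  have io2: "io (Xw v w (Suc i))"
  proof (cases "Suc i < Nv v")
    case True then show ?thesis by (rule io_Xw)
  next
    case False then have "Suc i = Nv v" using Suc.prems by simp
    then show ?thesis using assms Xw_N by simp
  qed
  have "(f_sigma k s ^^ Suc i) (val_inf (Phi v w)) = f_sigma k s (val_inf (Xw v w i))"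
    using Suc by simp
  also have "\<dots> = val_inf (sigp 0 (Xw v w i))"
    by (rule f_step[OF io_Xw[OF i] nonper_Xw[OF i]]) (simp add: sig_Xw[OF i] io2)
  finally show ?case by (simp add: sig_Xw[OF i])
qed

lemma Phi_main: "io w \<Longrightarrow> (f_sigma k s ^^ Nv v) (val_inf (Phi v w)) = val_inf w"
  using iter_Phi[of w "Nv v" v] by (simp add: Xw_N)

lemma io_Phi: "v \<noteq> [] \<Longrightarrow> io (Phi v w)"
  unfolding Phi_def by (rule io_Xw) (rule Nv_pos)

lemma val_Phi: "val_fin v \<le> val_inf (Phi v w)" "val_inf (Phi v w) \<le> val_fin v + 1 / 2 ^ length v"
  unfolding Phi_pre by (rule val_cyl)+

lemma io_ones: "io (\<lambda>_. True)" by (auto simp: io_def)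

lemma approx_L:
  fixes y e :: real
  assumes "0 \<le> y" "y \<le> 1" "0 < e"
  shows "\<exists>v. v \<noteq> [] \<and> val_fin v \<le> y \<and> y \<le> val_fin v + 1 / 2 ^ length v \<and> 1 / 2 ^ length v < e"
proof -
  obtain L where L: "L > 0" "1 / 2 ^ L < e" using small_pow[OF assms(3)] by blast
  obtain v where "length v = L" "val_fin v \<le> y" "y \<le> val_fin v + 1 / 2 ^ L"
    using approx_exists[OF assms(1,2)] by blast
  then show ?thesis using L by (intro exI[of _ v]) auto
qed

theorem per_dense: "dense_periodic (f_sigma k s)"
  unfolding dense_periodic_def
proof (intro ballI allI impI)
  fix y e :: real assume y: "y \<in> {0..1}" and e: "0 < e"
  obtain v where v: "v \<noteq> []" "val_fin v \<le> y" "y \<le> val_fin v + 1 / 2 ^ length v" "1 / 2 ^ length v < e"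
    using approx_L[of y e] y e by auto
  have "\<exists>R :: nat \<Rightarrow> nat \<Rightarrow> bool. (\<lambda>R i. Phi v (R i)) R = R"
  proof (rule fixpoint)
    fix L and R R' :: "nat \<Rightarrow> nat \<Rightarrow> bool"
    assume "\<forall>i. agree L (R i) (R' i)"
    then have "\<forall>i. agree (L + length v) (Phi v (R i)) (Phi v (R' i))" using Phi_agree by blast
    moreover have "Suc L \<le> L + length v" using v(1) by (cases v) auto
    ultimately show "\<forall>i. agree (Suc L) (Phi v (R i)) (Phi v (R' i))" using agree_mono by blast
  qed
  then obtain R :: "nat \<Rightarrow> nat \<Rightarrow> bool" where R: "(\<lambda>i. Phi v (R i)) = R" by auto
  define W where "W = R 0"
  have W: "Phi v W = W" unfolding W_def using fun_cong[OF R, of 0] by simp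
  have ioW: "io W" using io_Phi[OF v(1), of W] W by simp
  define p where "p = val_inf W"
  have per: "(f_sigma k s ^^ Nv v) p = p" using Phi_main[OF ioW, of v] W by (simp add: p_def)
  have "val_fin v \<le> p" "p \<le> val_fin v + 1 / 2 ^ length v" using val_Phi[of v W] W by (auto simp: p_def)
  then have "\<bar>p - y\<bar> < e" using v by linarith
  moreover have "p \<in> {0..1}" using val_nonneg val_le1 by (simp add: p_def)
  ultimately show "\<exists>p\<in>{0..1}. \<bar>p - y\<bar> < e \<and> (\<exists>n>0. (f_sigma k s ^^ n) p = p)"
    using per Nv_pos[OF v(1)] by blast
qed

theorem sens: "sensitive (f_sigma k s)"
  unfolding sensitive_def
proof (intro exI[of _ "1/4"] conjI ballI allI impI)
  fix x d :: real assume x: "x \<in> {0..1}" and d: "0 < d"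
  obtain v where v: "v \<noteq> []" "val_fin v \<le> x" "x \<le> val_fin v + 1 / 2 ^ length v" "1 / 2 ^ length v < d"
    using approx_L[of x d] x d by auto
  define w1 where "w1 = (\<lambda>_::nat. True)"
  define w2 where "w2 = pre [False] w1"
  have io1: "io w1" by (simp add: w1_def io_ones)
  have io2: "io w2" unfolding w2_def by (rule io_pre[OF io1])
  have v1: "val_inf w1 = 1" by (simp add: w1_def val_ones)
  have v2: "val_inf w2 = 1/2" using val_pre[of "[False]" w1] v1 by (simp add: w2_def val_fin_def)
  define z1 where "z1 = val_inf (Phi v w1)"
  define z2 where "z2 = val_inf (Phi v w2)"
  have c1: "\<bar>x - z1\<bar> < d" "z1 \<in> {0..1}" using val_Phi[of v w1] v val_nonneg val_le1 by (auto simp: z1_def)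
  have c2: "\<bar>x - z2\<bar> < d" "z2 \<in> {0..1}" using val_Phi[of v w2] v val_nonneg val_le1 by (auto simp: z2_def)
  have f1: "(f_sigma k s ^^ Nv v) z1 = 1" using Phi_main[OF io1, of v] v1 by (simp add: z1_def)
  have f2: "(f_sigma k s ^^ Nv v) z2 = 1/2" using Phi_main[OF io2, of v] v2 by (simp add: z2_def)
  show "\<exists>z\<in>{0..1}. \<bar>x - z\<bar> < d \<and> (\<exists>n. 1/4 \<le> \<bar>(f_sigma k s ^^ n) x - (f_sigma k s ^^ n) z\<bar>)"
  proof (cases "1/4 \<le> \<bar>(f_sigma k s ^^ Nv v) x - 1\<bar>")
    case True then show ?thesis using c1 f1 by metis
  next
    case False
    then have "1/4 \<le> \<bar>(f_sigma k s ^^ Nv v) x - 1/2\<bar>" by linarith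
    then show ?thesis using c2 f2 by metis
  qed
qed (simp)

definition vs :: "nat \<Rightarrow> bool list" where "vs j = from_nat j @ [True]"

theorem orbit_dense: "dense_orbit (f_sigma k s)"
  unfolding dense_orbit_def
proof -
  have "\<exists>R :: nat \<Rightarrow> nat \<Rightarrow> bool. (\<lambda>R j. Phi (vs j) (R (Suc j))) R = R"
  proof (rule fixpoint)
    fix L and R R' :: "nat \<Rightarrow> nat \<Rightarrow> bool"
    assume "\<forall>i. agree L (R i) (R' i)"
    then have "\<forall>j. agree (L + length (vs j)) (Phi (vs j) (R (Suc j))) (Phi (vs j) (R' (Suc j)))"
      using Phi_agree by blast
    moreover have "Suc L \<le> L + length (vs j)" for j by (simp add: vs_def)
    ultimately show "\<forall>j. agree (Suc L) (Phi (vs j) (R (Suc j))) (Phi (vs j) (R' (Suc j)))"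
      using agree_mono by blast
  qed
  then obtain R where R: "(\<lambda>j. Phi (vs j) (R (Suc j))) = R" by auto
  have Rj: "R j = Phi (vs j) (R (Suc j))" for j using fun_cong[OF R, of j] by simp
  have ioR: "io (R j)" for j using io_Phi[of "vs j" "R (Suc j)"] Rj[of j] by (simp add: vs_def)
  define S where "S j = (\<Sum>i<j. Nv (vs i))" for j
  have orb: "(f_sigma k s ^^ S j) (val_inf (R 0)) = val_inf (R j)" for j
  proof (induction j)
    case 0 then show ?case by (simp add: S_def)
  next
    case (Suc j)
    have "S (Suc j) = Nv (vs j) + S j" by (simp add: S_def)
    then have "(f_sigma k s ^^ S (Suc j)) (val_inf (R 0)) = (f_sigma k s ^^ Nv (vs j)) (val_inf (R j))"
      using Suc by (simp add: funpow_add)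
    also have "\<dots> = val_inf (R (Suc j))"
      using Phi_main[OF ioR[of "Suc j"], of "vs j"] Rj[of j] by simp
    finally show ?case .
  qed
  show "\<exists>x\<in>{0..1}. \<forall>y\<in>{0..1}. \<forall>e>0. \<exists>n. \<bar>(f_sigma k s ^^ n) x - y\<bar> < e"
  proof (intro bexI[of _ "val_inf (R 0)"] ballI allI impI)
    fix y e :: real assume y: "y \<in> {0..1}" and e: "0 < e"
    obtain v where v: "v \<noteq> []" "val_fin v \<le> y" "y \<le> val_fin v + 1 / 2 ^ length v" "1 / 2 ^ length v < e"
      using approx_L[of y e] y e by auto
    define j where "j = to_nat v"
    have vj: "vs j = v @ [True]" by (simp add: vs_def j_def)
    have "R j = pre v (pre [True] (Yw (vs j) (R (Suc j)) 0))"
      using Rj[of j] by (simp add: Phi_pre vj pre_append)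
    then have "val_fin v \<le> val_inf (R j)" "val_inf (R j) \<le> val_fin v + 1 / 2 ^ length v"
      using val_cyl by auto
    then have "\<bar>(f_sigma k s ^^ S j) (val_inf (R 0)) - y\<bar> < e" using orb[of j] v by simp
    then show "\<exists>n. \<bar>(f_sigma k s ^^ n) (val_inf (R 0)) - y\<bar> < e" by blast
  qed (use val_nonneg val_le1 in simp)
qed

end



theorem mainTheorem15:
  fixes k :: nat and s :: "nat \<Rightarrow> bool \<Rightarrow> bool list"
  assumes "k \<ge> 2"
    and "completely_erasing k s"
    and "w_eps k s \<noteq> replicate k True"
    and "optimal k s"
  shows "dense_orbit (f_sigma k s) \<and> dense_periodic (f_sigma k s) \<and> sensitive (f_sigma k s)"
proof -
  interpret subst k s using assms(1,2,4) by unfold_locales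
  show ?thesis using orbit_dense per_dense sens by blast
qed

end
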